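(* Let $x\in\mathbb{R}^{2d}$ be in the exterior of $\overline M$. Then $\overline n_+(x)=n_+(x)-n_-(x)=-\overline n_-(x)$, and in particular $\overline R(n_+(x)-n_-(x))\sim x$ and $\overline R(n_-(x)-n_+(x))\sim -x$.
   Context: Work in $\mathbb{R}^{2d}$ with its standard inner product, symplectic form $\omega$ and complex structure $J$. Let $M\subset\mathbb{R}^{2d}$ be a smooth closed quadratically convex hypersurface with the origin inside. For $x\in M$, $R(x)$ is the unique vector with $\omega(v,R(x))=0$ for all $v\in T_xM$ and $\omega(x,R(x))=1$. Write $a\sim b$ if $a,b$ are proportional with a positive coefficient. For $x$ in the exterior of $M$, $n_-(x),n_+(x)\in M$ are the unique points with $R(n_-(x))\sim -x$ and $R(n_+(x))\sim x$; equivalently $n_+(x)=G^{-1}(-Jx/|x|)$ and $n_-(x)=G^{-1}(Jx/|x|)$, where $G:M\to S^{2d-1}$ is the outward normal Gauss map. The symmetrization $\overline M$ of $M$ is the centrally symmetric hypersurface with support function $\bar p(v)=p(v)+p(-v)$ ($p$ the support function of $M$), i.e. the Minkowski sum of $M$ and $-M$; its Gauss map $\overline G$ satisfies $\overline G^{-1}(v)=G^{-1}(v)-G^{-1}(-v)$. The quantities $\overline R$, $\overline n_\pm$ are defined for $\overline M$ exactly as $R$, $n_\pm$ are for $M$. *)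

theory Defs
  imports "HOL-Analysis.Analysis"
begin

text \<open>Ambient space R^{2d} = R^d x R^d, points (q,p).\<close>
type_synonym 'd phase = "(real^'d) \<times> (real^'d)"

text \<open>Standard complex structure J(q,p) = (-p,q) and symplectic form omega(u,v) = <Ju,v>
  (= sum dq_i /\ dp_i).\<close>
definition Jmap :: "'d::finite phase \<Rightarrow> 'd phase" where
  "Jmap u = (- snd u, fst u)"

definition omega :: "'d::finite phase \<Rightarrow> 'd phase \<Rightarrow> real" where
  "omega u v = Jmap u \<bullet> v"

definition pos_prop :: "'a::real_vector \<Rightarrow> 'a \<Rightarrow> bool" where
  "pos_prop a b \<longleftrightarrow> (\<exists>c>0. a = c *\<^sub>R b)"

coinductive smooth_fun :: "('a::real_normed_vector \<Rightarrow> real) \<Rightarrow> bool" where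
  "(\<forall>x. F differentiable (at x)) \<Longrightarrow>
   (\<forall>v. smooth_fun (\<lambda>x. frechet_derivative F (at x) v)) \<Longrightarrow> smooth_fun F"

definition D2 :: "('a::real_normed_vector \<Rightarrow> real) \<Rightarrow> 'a \<Rightarrow> 'a \<Rightarrow> 'a \<Rightarrow> real" where
  "D2 F x v w = frechet_derivative (\<lambda>y. frechet_derivative F (at y) v) (at x) w"

text \<open>K is the compact convex body with 0 in its interior bounded by a smooth closed
  quadratically convex hypersurface frontier K: there is a smooth defining function F with
  K = {F <= 0}, frontier K = {F = 0}, dF nonzero on frontier K, and the Hessian of F
  positive definite on the tangent spaces ker dF.\<close>
definition qconvex_body :: "'d::finite phase set \<Rightarrow> bool" where
  "qconvex_body K \<longleftrightarrow> compact K \<and> convex K \<and> 0 \<in> interior K \<and>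
     (\<exists>F. smooth_fun F \<and> K = {x. F x \<le> 0} \<and> frontier K = {x. F x = 0} \<and>
        (\<forall>x\<in>frontier K. frechet_derivative F (at x) \<noteq> (\<lambda>v. 0)) \<and>
        (\<forall>x\<in>frontier K. \<forall>v. v \<noteq> 0 \<and> frechet_derivative F (at x) v = 0 \<longrightarrow> D2 F x v v > 0))"

definition tangent_space :: "'a::real_normed_vector set \<Rightarrow> 'a \<Rightarrow> 'a set" where
  "tangent_space M x = {v. \<exists>\<gamma>. (\<forall>t. \<gamma> t \<in> M) \<and> \<gamma> 0 = x \<and> (\<gamma> has_vector_derivative v) (at 0)}"

definition Rvec :: "'d::finite phase set \<Rightarrow> 'd phase \<Rightarrow> 'd phase" where
  "Rvec M x = (THE r. (\<forall>v\<in>tangent_space M x. omega v r = 0) \<and> omega x r = 1)"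

definition n_plus :: "'d::finite phase set \<Rightarrow> 'd phase \<Rightarrow> 'd phase" where
  "n_plus M x = (THE y. y \<in> M \<and> pos_prop (Rvec M y) x)"

definition n_minus :: "'d::finite phase set \<Rightarrow> 'd phase \<Rightarrow> 'd phase" where
  "n_minus M x = (THE y. y \<in> M \<and> pos_prop (Rvec M y) (- x))"

text \<open>Symmetrization: the hypersurface bounding the Minkowski sum K + (-K).\<close>
definition sym_body :: "'a::real_vector set \<Rightarrow> 'a set" where
  "sym_body K = {a - b | a b. a \<in> K \<and> b \<in> K}"

end

theory Submission
  imports Defs
begin

lemma J_J: "Jmap (Jmap u) = - u" by (simp add: Jmap_def prod_eq_iff)
lemma J_inner_J: "Jmap u \<bullet> Jmap v = u \<bullet> v"
  by (simp add: Jmap_def inner_Pair_0 inner_prod_def)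
lemma J_inner_swap: "Jmap u \<bullet> v = - (u \<bullet> Jmap v)"
  by (simp add: Jmap_def inner_prod_def inner_commute)
lemma J_scale: "Jmap (c *\<^sub>R u) = c *\<^sub>R Jmap u" by (simp add: Jmap_def)
lemma J_minus: "Jmap (- u) = - Jmap u" by (simp add: Jmap_def)

lemma Rvec_hyper:
  fixes l p :: "'d::finite phase"
  assumes T: "tangent_space S p = {w. l \<bullet> w = 0}" and lp: "l \<bullet> p > 0"
  shows "Rvec S p = (1 / (l \<bullet> p)) *\<^sub>R Jmap l"
proof -
  let ?r = "(1 / (l \<bullet> p)) *\<^sub>R Jmap l"
  have ex: "(\<forall>v\<in>tangent_space S p. omega v ?r = 0) \<and> omega p ?r = 1"
    using lp by (simp add: T omega_def J_inner_J inner_commute)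
  have un: "r = ?r" if r: "(\<forall>v\<in>tangent_space S p. omega v r = 0) \<and> omega p r = 1" for r
  proof -
    define q where "q = Jmap r"
    have qo: "q \<bullet> v = 0" if "l \<bullet> v = 0" for v
    proof -
      have "omega v r = 0" using r that by (simp add: T del: split_paired_All)
      then show ?thesis using J_inner_swap[of v r] by (simp add: omega_def q_def inner_commute)
    qed
    define c where "c = (q \<bullet> l) / (l \<bullet> l)"
    have l0: "l \<bullet> l \<noteq> 0" using lp by auto
    define w where "w = q - c *\<^sub>R l"
    have "l \<bullet> w = 0" using l0 by (simp add: w_def c_def inner_diff_right inner_commute)
    then have "q \<bullet> w = 0" by (rule qo)
    then have "w \<bullet> w = 0" using \<open>l \<bullet> w = 0\<close>
      by (simp add: w_def inner_diff_left inner_commute)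
    then have qc: "q = c *\<^sub>R l" by (simp add: w_def)
    have rr: "r = - c *\<^sub>R Jmap l"
      using J_J[of r] qc by (simp add: q_def[symmetric] J_scale)
    have "1 = omega p r" using r by simp
    also have "\<dots> = - c * (l \<bullet> p)" by (simp add: omega_def rr J_inner_J inner_commute)
    finally have "c = - 1 / (l \<bullet> p)" using lp by (simp add: field_simps)
    then show ?thesis using rr by simp
  qed
  show ?thesis unfolding Rvec_def using ex un by (intro the_equality) blast+
qed

lemma shrink_interior:
  fixes C :: "'a::euclidean_space set"
  assumes "convex C" "0 \<in> interior C" "z \<in> C" "0 \<le> s" "s < 1"
  shows "s *\<^sub>R z \<in> interior C"
proof -
  have "z - (1 - s) *\<^sub>R (z - 0) \<in> interior C"
    by (rule mem_interior_convex_shrink[OF assms(1,2,3)]) (use assms in auto)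
  moreover have "z - (1 - s) *\<^sub>R (z - 0) = s *\<^sub>R z" by (simp add: algebra_simps)
  ultimately show ?thesis by simp
qed

lemma ray_unique:
  fixes C :: "'a::euclidean_space set"
  assumes "convex C" "closed C" "0 \<in> interior C" "0 < d1" "0 < d2"
    "d1 *\<^sub>R l \<in> frontier C" "d2 *\<^sub>R l \<in> frontier C"
  shows "d1 = d2"
proof -
  have *: False if "0 < a" "a < b" "a *\<^sub>R l \<in> frontier C" "b *\<^sub>R l \<in> frontier C" for a b
  proof -
    have "b *\<^sub>R l \<in> C" using that assms(2) frontier_subset_closed by blast
    then have "(a / b) *\<^sub>R (b *\<^sub>R l) \<in> interior C"
      using that by (intro shrink_interior[OF assms(1,3)]) auto
    then have "a *\<^sub>R l \<in> interior C" using that by simp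
    then show False using that(3) by (simp add: frontier_def)
  qed
  show ?thesis using *[of d1 d2] *[of d2 d1] assms by fastforce
qed

lemma pos_support:
  fixes C :: "'a::euclidean_space set"
  assumes "0 \<in> interior C" "l \<noteq> 0" "\<forall>z\<in>C. l \<bullet> z \<le> l \<bullet> p"
  shows "l \<bullet> p > 0"
proof -
  obtain e where e: "e > 0" "ball 0 e \<subseteq> C" using assms(1) mem_interior by blast
  define z where "z = (e / 2 / norm l) *\<^sub>R l"
  have "norm z = e / 2" using e assms(2) by (simp add: z_def)
  then have "z \<in> C" using e by (auto simp: dist_norm)
  moreover have "l \<bullet> z = e / 2 * norm l" using assms(2)
    by (simp add: z_def power2_norm_eq_inner[symmetric] power2_eq_square)
  moreover have "norm l > 0" using assms(2) by simp
  ultimately show ?thesis using assms(3) e by (metis (no_types, opaque_lifting) divide_pos_pos mult_pos_pos order_less_le_trans zero_less_numeral)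
qed

lemma support_not_interior:
  fixes C :: "'a::euclidean_space set"
  assumes "l \<noteq> 0" "\<forall>z\<in>C. l \<bullet> z \<le> l \<bullet> p"
  shows "p \<notin> interior C"
proof
  assume "p \<in> interior C"
  then obtain e where e: "e > 0" "ball p e \<subseteq> C" using mem_interior by blast
  define z where "z = p + (e / 2 / norm l) *\<^sub>R l"
  have "norm (z - p) = e / 2" using e assms(1) by (simp add: z_def)
  then have "z \<in> C" using e by (auto simp: dist_norm norm_minus_commute)
  moreover have "l \<bullet> z = l \<bullet> p + e / 2 * norm l" using assms(1)
    by (simp add: z_def inner_add_right power2_norm_eq_inner[symmetric] power2_eq_square)
  moreover have "norm l > 0" using assms(1) by simp
  ultimately show False using assms(2) e by (smt (verit, best) divide_pos_pos mult_pos_pos)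
qed

lemma tangent_sub_kernel:
  fixes C :: "'a::euclidean_space set"
  assumes "closed C" "\<forall>z\<in>C. l \<bullet> z \<le> l \<bullet> p" "w \<in> tangent_space (frontier C) p"
  shows "l \<bullet> w = 0"
proof -
  obtain \<gamma> where g: "\<forall>t. \<gamma> t \<in> frontier C" "\<gamma> 0 = p" "(\<gamma> has_vector_derivative w) (at 0)"
    using assms(3) unfolding tangent_space_def by blast
  have "((\<lambda>t. l \<bullet> \<gamma> t) has_vector_derivative l \<bullet> w) (at 0)"
    by (rule bounded_linear.has_vector_derivative[OF bounded_linear_inner_right g(3)])
  then have d: "DERIV (\<lambda>t. l \<bullet> \<gamma> t) 0 :> l \<bullet> w"
    by (simp add: has_real_derivative_iff_has_vector_derivative)
  have "\<forall>y. \<bar>0 - y\<bar> < 1 \<longrightarrow> l \<bullet> \<gamma> y \<le> l \<bullet> \<gamma> 0"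
    using g(1,2) assms(1,2) frontier_subset_closed by blast
  then show ?thesis using DERIV_local_max[OF d, of 1] by simp
qed

lemma tangent_of_flat:
  fixes C :: "'a::euclidean_space set"
  assumes cvx: "convex C" and cpt: "compact C" and int0: "0 \<in> interior C"
    and pF: "p \<in> frontier C" and supp: "\<forall>z\<in>C. l \<bullet> z \<le> l \<bullet> p" and lp: "l \<bullet> p > 0"
    and lw: "l \<bullet> w = 0"
    and flat: "\<forall>\<epsilon>>0. eventually (\<lambda>t. (1 / (1 + \<epsilon> * \<bar>t\<bar>)) *\<^sub>R (p + t *\<^sub>R w) \<in> C) (at 0)"
  shows "w \<in> tangent_space (frontier C) p"
proof -
  have cl: "closed C" and bd: "bounded C" using cpt compact_imp_closed compact_imp_bounded by auto
  have fC: "frontier C \<subseteq> C" using cl frontier_subset_closed by blast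
  have nz: "p + t *\<^sub>R w \<noteq> 0" for t
  proof
    assume "p + t *\<^sub>R w = 0"
    then have "l \<bullet> (p + t *\<^sub>R w) = 0" by simp
    then show False using lw lp by (simp add: inner_add_right)
  qed
  define r where "r t = (SOME d. 0 < d \<and> d *\<^sub>R (p + t *\<^sub>R w) \<in> frontier C)" for t
  have rp: "0 < r t \<and> r t *\<^sub>R (p + t *\<^sub>R w) \<in> frontier C" for t
  proof -
    obtain d where "0 < d" "0 + d *\<^sub>R (p + t *\<^sub>R w) \<in> frontier C"
      using ray_to_frontier[OF bd int0 nz[of t]] by blast
    then show ?thesis unfolding r_def
      using someI[of "\<lambda>d. 0 < d \<and> d *\<^sub>R (p + t *\<^sub>R w) \<in> frontier C" d] by simp
  qed
  have r0: "r 0 = 1"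
    using ray_unique[OF cvx cl int0, of "r 0" 1 p] rp[of 0] pF by simp
  have rle: "r t \<le> 1" for t
  proof -
    have "l \<bullet> (r t *\<^sub>R (p + t *\<^sub>R w)) \<le> l \<bullet> p" using rp[of t] fC supp by blast
    then have "r t * (l \<bullet> p) \<le> 1 * (l \<bullet> p)" using lw by (simp add: inner_add_right)
    then show ?thesis using lp by (simp add: mult_le_cancel_right)
  qed
  have rge: "eventually (\<lambda>t. 1 / (1 + \<epsilon> * \<bar>t\<bar>) \<le> r t) (at 0)" if "\<epsilon> > 0" for \<epsilon>
    using flat[rule_format, OF that]
  proof eventually_elim
    case (elim t)
    define s where "s = 1 / (1 + \<epsilon> * \<bar>t\<bar>)"
    have s0: "s > 0" using that by (simp add: s_def add_pos_nonneg)
    show ?case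
    proof (rule ccontr)
      assume "\<not> ?case"
      then have lt: "r t < s" by (simp add: s_def)
      have "(r t / s) *\<^sub>R (s *\<^sub>R (p + t *\<^sub>R w)) \<in> interior C"
      proof (rule shrink_interior[OF cvx int0])
        show "s *\<^sub>R (p + t *\<^sub>R w) \<in> C" using elim by (simp add: s_def)
        show "0 \<le> r t / s" using s0 rp[of t] by simp
        show "r t / s < 1" using s0 lt by simp
      qed
      then have "r t *\<^sub>R (p + t *\<^sub>R w) \<in> interior C" using s0 by simp
      then show False using rp[of t] by (simp add: frontier_def)
    qed
  qed
  have rbound: "eventually (\<lambda>t. \<bar>r t - 1\<bar> \<le> \<epsilon> * \<bar>t\<bar>) (at 0)" if "\<epsilon> > 0" for \<epsilon>
    using rge[OF that]
  proof eventually_elim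
    case (elim t)
    have pos: "1 + \<epsilon> * \<bar>t\<bar> > 0" using that by (simp add: add_pos_nonneg)
    have "1 - r t \<le> 1 - 1 / (1 + \<epsilon> * \<bar>t\<bar>)" using elim by simp
    also have "\<dots> = \<epsilon> * \<bar>t\<bar> / (1 + \<epsilon> * \<bar>t\<bar>)" using pos by (simp add: field_simps)
    also have "\<dots> \<le> \<epsilon> * \<bar>t\<bar>"
    proof -
      have "\<epsilon> * \<bar>t\<bar> \<le> \<epsilon> * \<bar>t\<bar> * (1 + \<epsilon> * \<bar>t\<bar>)"
        using that by (simp add: algebra_simps)
      then show ?thesis using pos by (simp add: divide_le_eq)
    qed
    finally show ?case using rle[of t] by simp
  qed
  have dr: "(r has_field_derivative 0) (at 0)"
    unfolding has_field_derivative_iff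
  proof (rule tendstoI)
    fix e :: real assume e: "e > 0"
    have "eventually (\<lambda>t. t \<noteq> 0) (at (0::real))" by (simp add: eventually_at_filter)
    then have ev: "eventually (\<lambda>t. \<bar>r t - 1\<bar> \<le> e / 2 * \<bar>t\<bar> \<and> t \<noteq> 0) (at 0)"
      using rbound[of "e/2"] e by (simp add: eventually_conj_iff)
    show "eventually (\<lambda>t. dist ((r t - r 0) / (t - 0)) 0 < e) (at 0)"
      using ev
    proof (rule eventually_mono)
      fix t :: real assume a: "\<bar>r t - 1\<bar> \<le> e / 2 * \<bar>t\<bar> \<and> t \<noteq> 0"
      then have "\<bar>r t - 1\<bar> / \<bar>t\<bar> \<le> e / 2" by (simp add: divide_le_eq)
      moreover have "dist ((r t - r 0) / (t - 0)) 0 = \<bar>r t - 1\<bar> / \<bar>t\<bar>"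
        by (simp add: r0 abs_divide dist_real_def)
      ultimately show "dist ((r t - r 0) / (t - 0)) 0 < e" using e by linarith
    qed
  qed
  have dl: "((\<lambda>t. p + t *\<^sub>R w) has_vector_derivative w) (at 0)"
    by (auto intro!: derivative_eq_intros)
  have "((\<lambda>t. r t *\<^sub>R (p + t *\<^sub>R w)) has_vector_derivative (r 0 *\<^sub>R w + 0 *\<^sub>R (p + 0 *\<^sub>R w))) (at 0)"
    by (rule has_vector_derivative_scaleR[OF dr dl])
  then have "((\<lambda>t. r t *\<^sub>R (p + t *\<^sub>R w)) has_vector_derivative w) (at 0)" by (simp add: r0)
  moreover have "(\<lambda>t. r t *\<^sub>R (p + t *\<^sub>R w)) 0 = p" by (simp add: r0)
  ultimately show ?thesis unfolding tangent_space_def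
    by (intro CollectI exI[of _ "\<lambda>t. r t *\<^sub>R (p + t *\<^sub>R w)"]) (use rp in auto)
qed

lemma deriv_nonpos_right:
  fixes \<phi> :: "real \<Rightarrow> real"
  assumes d: "(\<phi> has_field_derivative D) (at 0)" and le: "\<forall>s. 0 < s \<and> s < 1 \<longrightarrow> \<phi> s \<le> \<phi> 0"
  shows "D \<le> 0"
proof -
  have "((\<lambda>y. (\<phi> y - \<phi> 0) / (y - 0)) \<longlongrightarrow> D) (at 0)"
    using d by (simp add: has_field_derivative_iff)
  then have t: "((\<lambda>y. (\<phi> y - \<phi> 0) / (y - 0)) \<longlongrightarrow> D) (at_right 0)"
    by (rule filterlim_mono[OF _ order_refl at_le]) simp
  have "eventually (\<lambda>y. (\<phi> y - \<phi> 0) / (y - 0) \<le> 0) (at_right (0::real))"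
    unfolding eventually_at_right_field
  proof (intro exI[of _ 1] conjI allI impI)
    fix y :: real assume "0 < y" "y < 1"
    then show "(\<phi> y - \<phi> 0) / (y - 0) \<le> 0" using le by (simp add: divide_nonpos_pos)
  qed simp
  then show ?thesis using tendsto_upperbound[OF t] by simp
qed

lemma deriv_const_right:
  fixes \<phi> :: "real \<Rightarrow> real"
  assumes d: "(\<phi> has_field_derivative D) (at 0)" and eq: "\<forall>s. 0 < s \<and> s < 1 \<longrightarrow> \<phi> s = \<phi> 0"
  shows "D = 0"
proof -
  have "D \<le> 0" using deriv_nonpos_right[OF d] eq by simp
  moreover have "- D \<le> 0"
    using deriv_nonpos_right[of "\<lambda>s. - \<phi> s" "- D"] DERIV_minus[OF d] eq by simp
  ultimately show ?thesis by simp
qed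

lemma line_deriv:
  fixes F :: "'a::real_normed_vector \<Rightarrow> real"
  assumes "(F has_derivative L) (at (a + s0 *\<^sub>R v))"
  shows "((\<lambda>s. F (a + s *\<^sub>R v)) has_field_derivative L v) (at s0)"
proof -
  have l: "((\<lambda>s. a + s *\<^sub>R v) has_derivative (\<lambda>s. s *\<^sub>R v)) (at s0)"
    by (auto intro!: derivative_eq_intros)
  have "((\<lambda>s. F (a + s *\<^sub>R v)) has_derivative (\<lambda>s. L (s *\<^sub>R v))) (at s0)"
    using has_derivative_compose[OF l, of F L] assms by simp
  moreover have "linear L" using assms has_derivative_linear by blast
  ultimately show ?thesis
    by (intro has_derivative_imp_has_field_derivative) (auto simp: linear_scale)
qed

lemma perp_parallel:
  fixes g l :: "'a::real_inner"
  assumes "g \<noteq> 0" "\<forall>w. g \<bullet> w = 0 \<longrightarrow> l \<bullet> w = 0"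
  shows "l = ((l \<bullet> g) / (g \<bullet> g)) *\<^sub>R g"
proof -
  define c where "c = (l \<bullet> g) / (g \<bullet> g)"
  define w where "w = l - c *\<^sub>R g"
  have gg: "g \<bullet> g \<noteq> 0" using assms(1) by simp
  have "g \<bullet> w = 0" using gg by (simp add: w_def c_def inner_diff_right inner_commute)
  then have "l \<bullet> w = 0" using assms(2) by blast
  then have "w \<bullet> w = 0" using \<open>g \<bullet> w = 0\<close> by (simp add: w_def inner_diff_left inner_commute)
  then show ?thesis by (simp add: w_def c_def)
qed

locale qbody =
  fixes K :: "'a::euclidean_space set" and F :: "'a \<Rightarrow> real"
  assumes cpt: "compact K" and cvx: "convex K" and int0: "0 \<in> interior K"
    and sm: "smooth_fun F" and KF: "K = {x. F x \<le> 0}" and fr: "frontier K = {x. F x = 0}"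
    and dF0: "\<forall>x\<in>frontier K. frechet_derivative F (at x) \<noteq> (\<lambda>v. 0)"
    and D2pos: "\<forall>x\<in>frontier K. \<forall>v. v \<noteq> 0 \<and> frechet_derivative F (at x) v = 0 \<longrightarrow> D2 F x v v > 0"
begin

definition "grad x = adjoint (frechet_derivative F (at x)) 1"

lemma cl: "closed K" using cpt compact_imp_closed by blast

lemma fK: "frontier K \<subseteq> K" using cl frontier_subset_closed by blast

lemma smF: "\<forall>x. F differentiable (at x)" "\<forall>v. smooth_fun (\<lambda>x. frechet_derivative F (at x) v)"
  using sm by (cases rule: smooth_fun.cases, auto)+

lemma hasd: "(F has_derivative frechet_derivative F (at x)) (at x)"
  using smF(1) frechet_derivative_works by blast

lemma gradp: "frechet_derivative F (at x) v = grad x \<bullet> v"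
proof -
  have "linear (frechet_derivative F (at x))" using hasd has_derivative_linear by blast
  then show ?thesis using adjoint_works[of "frechet_derivative F (at x)" v 1]
    by (simp add: grad_def inner_commute)
qed

lemma grad_nz: "a \<in> frontier K \<Longrightarrow> grad a \<noteq> 0"
  using dF0 gradp by fastforce

lemma Fa0: "a \<in> frontier K \<Longrightarrow> F a = 0" using fr by blast

lemma K1: assumes "a \<in> frontier K" "z \<in> K" shows "grad a \<bullet> z \<le> grad a \<bullet> a"
proof -
  have d: "((\<lambda>s. F (a + s *\<^sub>R (z - a))) has_field_derivative frechet_derivative F (at a) (z - a)) (at 0)"
    using line_deriv[of F _ a 0 "z - a"] hasd by simp
  have "\<forall>s. 0 < s \<and> s < 1 \<longrightarrow> F (a + s *\<^sub>R (z - a)) \<le> F (a + 0 *\<^sub>R (z - a))"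
  proof (intro allI impI)
    fix s :: real assume s: "0 < s \<and> s < 1"
    have "(1 - s) *\<^sub>R a + s *\<^sub>R z \<in> K"
      using s assms fK cvx by (intro convexD) auto
    moreover have "(1 - s) *\<^sub>R a + s *\<^sub>R z = a + s *\<^sub>R (z - a)" by (simp add: algebra_simps)
    ultimately show "F (a + s *\<^sub>R (z - a)) \<le> F (a + 0 *\<^sub>R (z - a))"
      using KF Fa0[OF assms(1)] by auto
  qed
  from deriv_nonpos_right[OF d this] show ?thesis by (simp add: gradp inner_diff_right)
qed

lemma gpos: "a \<in> frontier K \<Longrightarrow> grad a \<bullet> a > 0"
  using pos_support[OF int0 grad_nz] K1 by blast

lemma K2:
  assumes aF: "a \<in> frontier K" and gw: "grad a \<bullet> w = 0" and ep: "\<epsilon> > 0"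
  shows "eventually (\<lambda>t. (1 / (1 + \<epsilon> * \<bar>t\<bar>)) *\<^sub>R (a + t *\<^sub>R w) \<in> K) (at 0)"
proof -
  define g where "g = grad a"
  define c where "c = g \<bullet> a"
  define M where "M = norm w + \<epsilon> * norm a"
  have c0: "c > 0" using gpos[OF aF] by (simp add: c_def g_def)
  have M0: "M \<ge> 0" using ep by (simp add: M_def)
  define e where "e = \<epsilon> * c / (M + 1)"
  have e0: "e > 0" using ep c0 M0 by (simp add: e_def)
  have eM: "e * M \<le> \<epsilon> * c"
  proof -
    have "e * M = \<epsilon> * c * (M / (M + 1))" by (simp add: e_def)
    also have "\<dots> \<le> \<epsilon> * c * 1" using ep c0 M0 by (intro mult_left_mono) auto
    finally show ?thesis by simp
  qed
  obtain d where d0: "d > 0" and dd: "\<forall>y. norm (y - a) < d \<longrightarrow>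
      norm (F y - F a - frechet_derivative F (at a) (y - a)) \<le> e * norm (y - a)"
    using hasd[of a] e0 unfolding has_derivative_at_alt by blast
  show ?thesis unfolding eventually_at
  proof (intro exI[of _ "d / (M + 1)"] conjI ballI impI)
    show "d / (M + 1) > 0" using d0 M0 by simp
    fix t :: real assume "t \<in> UNIV" and "t \<noteq> 0 \<and> dist t 0 < d / (M + 1)"
    then have tb: "\<bar>t\<bar> < d / (M + 1)" by simp
    define s where "s = 1 / (1 + \<epsilon> * \<bar>t\<bar>)"
    have s0: "s > 0" and s1: "s \<le> 1" using ep by (auto simp: s_def add_pos_nonneg)
    have "1 + \<epsilon> * \<bar>t\<bar> > 0" using ep by (simp add: add_pos_nonneg)
    then have ss: "s * (1 + \<epsilon> * \<bar>t\<bar>) = 1" by (simp add: s_def)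
    define z where "z = s *\<^sub>R (a + t *\<^sub>R w)"
    have zma: "z - a = s *\<^sub>R (t *\<^sub>R w - (\<epsilon> * \<bar>t\<bar>) *\<^sub>R a)"
    proof -
      have "a = (s * (1 + \<epsilon> * \<bar>t\<bar>)) *\<^sub>R a" using ss by simp
      then have "z - a = s *\<^sub>R (a + t *\<^sub>R w) - (s * (1 + \<epsilon> * \<bar>t\<bar>)) *\<^sub>R a"
        unfolding z_def by metis
      then show ?thesis by (simp add: algebra_simps)
    qed
    have n1: "norm (t *\<^sub>R w - (\<epsilon> * \<bar>t\<bar>) *\<^sub>R a) \<le> \<bar>t\<bar> * M"
    proof -
      have "norm (t *\<^sub>R w - (\<epsilon> * \<bar>t\<bar>) *\<^sub>R a) \<le> norm (t *\<^sub>R w) + norm ((\<epsilon> * \<bar>t\<bar>) *\<^sub>R a)"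
        by (rule norm_triangle_ineq4)
      also have "\<dots> = \<bar>t\<bar> * M" using ep by (simp add: M_def algebra_simps)
      finally show ?thesis .
    qed
    have nz: "norm (z - a) \<le> s * (\<bar>t\<bar> * M)"
      using n1 s0 by (simp add: zma mult_left_mono)
    have "\<bar>t\<bar> * M \<le> \<bar>t\<bar> * (M + 1)" by (intro mult_left_mono) auto
    also have "\<dots> < d" using tb M0 by (simp add: pos_less_divide_eq mult.commute)
    finally have tMd: "\<bar>t\<bar> * M < d" .
    have "norm (z - a) \<le> \<bar>t\<bar> * M"
    proof -
      have "s * (\<bar>t\<bar> * M) \<le> 1 * (\<bar>t\<bar> * M)" using s1 M0 by (intro mult_right_mono) auto
      then show ?thesis using nz by simp
    qed
    then have close: "norm (z - a) < d" using tMd by simp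
    have lin: "frechet_derivative F (at a) (z - a) = - (s * (\<epsilon> * \<bar>t\<bar> * c))"
      by (simp add: gradp zma inner_diff_right g_def[symmetric] gw[folded g_def] c_def[symmetric])
    have "\<bar>F z - F a - frechet_derivative F (at a) (z - a)\<bar> \<le> e * norm (z - a)"
      using dd close by simp
    then have h1: "F z - F a - frechet_derivative F (at a) (z - a) \<le> e * norm (z - a)"
      by (rule abs_le_D1)
    have h2: "e * norm (z - a) \<le> e * (s * (\<bar>t\<bar> * M))" using nz e0 by (intro mult_left_mono) auto
    have "F z \<le> - (s * (\<epsilon> * \<bar>t\<bar> * c)) + e * (s * (\<bar>t\<bar> * M))"
      using Fa0[OF aF] lin h1 h2 by linarith
    also have "\<dots> = s * \<bar>t\<bar> * (e * M - \<epsilon> * c)" by (simp add: algebra_simps)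
    also have "\<dots> \<le> 0" using s0 eM by (simp add: mult_nonneg_nonpos)
    finally have "F z \<le> 0" .
    then show "(1 / (1 + \<epsilon> * \<bar>t\<bar>)) *\<^sub>R (a + t *\<^sub>R w) \<in> K"
      using KF by (simp add: z_def s_def)
  qed
qed

lemma K3: assumes aF: "a \<in> frontier K"
  shows "tangent_space (frontier K) a = {w. grad a \<bullet> w = 0}"
proof
  show "tangent_space (frontier K) a \<subseteq> {w. grad a \<bullet> w = 0}"
    using tangent_sub_kernel[OF cl] K1[OF aF] by blast
  show "{w. grad a \<bullet> w = 0} \<subseteq> tangent_space (frontier K) a"
  proof
    fix w assume "w \<in> {w. grad a \<bullet> w = 0}"
    then have gw: "grad a \<bullet> w = 0" by simp
    show "w \<in> tangent_space (frontier K) a"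
      by (rule tangent_of_flat[OF cvx cpt int0 aF _ gpos[OF aF] gw])
         (use K1[OF aF] K2[OF aF gw] in auto)
  qed
qed

lemma K4: assumes aF: "a \<in> frontier K" and l0: "l \<noteq> 0" and supp: "\<forall>z\<in>K. l \<bullet> z \<le> l \<bullet> a"
  shows "\<exists>c>0. l = c *\<^sub>R grad a"
proof -
  have "\<forall>w. grad a \<bullet> w = 0 \<longrightarrow> l \<bullet> w = 0"
    using K3[OF aF] tangent_sub_kernel[OF cl supp] by blast
  then have eq: "l = ((l \<bullet> grad a) / (grad a \<bullet> grad a)) *\<^sub>R grad a"
    by (rule perp_parallel[OF grad_nz[OF aF]])
  define c where "c = (l \<bullet> grad a) / (grad a \<bullet> grad a)"
  have "l \<bullet> a > 0" by (rule pos_support[OF int0 l0 supp])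
  moreover have "l \<bullet> a = c * (grad a \<bullet> a)" using eq by (metis c_def inner_scaleR_left)
  ultimately have "c > 0" using gpos[OF aF] by (simp add: zero_less_mult_iff)
  then show ?thesis using eq c_def by blast
qed

lemma max_frontier: assumes "a \<in> K" "u \<noteq> 0" "\<forall>z\<in>K. u \<bullet> z \<le> u \<bullet> a"
  shows "a \<in> frontier K"
  using support_not_interior[OF assms(2,3)] assms(1) cl by (simp add: frontier_def)

lemma K5: assumes u0: "u \<noteq> 0" and a1: "a1 \<in> K" "\<forall>z\<in>K. u \<bullet> z \<le> u \<bullet> a1"
  and a2: "a2 \<in> K" "\<forall>z\<in>K. u \<bullet> z \<le> u \<bullet> a2"
  shows "a1 = a2"
proof (rule ccontr)
  assume ne: "a1 \<noteq> a2"
  define v where "v = a2 - a1"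
  have v0: "v \<noteq> 0" using ne by (simp add: v_def)
  have ueq: "u \<bullet> a1 = u \<bullet> a2" using a1 a2 by force
  have seg: "F (a1 + s *\<^sub>R v) = 0" if "0 \<le> s" "s \<le> 1" for s
  proof -
    have "(1 - s) *\<^sub>R a1 + s *\<^sub>R a2 \<in> K" using that a1 a2 cvx by (intro convexD) auto
    moreover have "(1 - s) *\<^sub>R a1 + s *\<^sub>R a2 = a1 + s *\<^sub>R v" by (simp add: v_def algebra_simps)
    ultimately have inK: "a1 + s *\<^sub>R v \<in> K" by simp
    have "u \<bullet> (a1 + s *\<^sub>R v) = u \<bullet> a1" using ueq by (simp add: v_def inner_add_right inner_diff_right)
    then have "\<forall>z\<in>K. u \<bullet> z \<le> u \<bullet> (a1 + s *\<^sub>R v)" using a1 by simp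
    then have "a1 + s *\<^sub>R v \<in> frontier K" by (rule max_frontier[OF inK u0])
    then show ?thesis by (rule Fa0)
  qed
  have a1F: "a1 \<in> frontier K" using seg[of 0] fr by simp
  have dphi: "((\<lambda>s. F (a1 + s *\<^sub>R v)) has_field_derivative frechet_derivative F (at (a1 + s *\<^sub>R v)) v) (at s)" for s
    using line_deriv[of F _ a1 s v] hasd by simp
  have Fv0: "frechet_derivative F (at a1) v = 0"
  proof -
    have "\<forall>s. 0 < s \<and> s < 1 \<longrightarrow> F (a1 + s *\<^sub>R v) = F (a1 + 0 *\<^sub>R v)"
      using seg seg[of 0] by simp
    from deriv_const_right[OF dphi[of 0] this] show ?thesis by simp
  qed
  have psi0: "frechet_derivative F (at (a1 + s *\<^sub>R v)) v = 0" if "0 < s" "s < 1" for s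
  proof (rule DERIV_local_const[OF dphi[of s], of "min s (1 - s)"])
    show "0 < min s (1 - s)" using that by simp
    show "\<forall>y. \<bar>s - y\<bar> < min s (1 - s) \<longrightarrow> F (a1 + s *\<^sub>R v) = F (a1 + y *\<^sub>R v)"
      using that seg by (auto simp: abs_if split: if_splits)
  qed
  define \<psi> where "\<psi> = (\<lambda>x. frechet_derivative F (at x) v)"
  have "\<psi> differentiable (at x)" for x
  proof -
    have "smooth_fun \<psi>" using smF(2) by (simp add: \<psi>_def)
    then show ?thesis by (cases rule: smooth_fun.cases) blast
  qed
  then have hpsi: "(\<psi> has_derivative frechet_derivative \<psi> (at a1)) (at (a1 + 0 *\<^sub>R v))"
    using frechet_derivative_works[of \<psi> "at a1"] by simp
  have dh: "((\<lambda>s. \<psi> (a1 + s *\<^sub>R v)) has_field_derivative frechet_derivative \<psi> (at a1) v) (at 0)"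
    by (rule line_deriv[OF hpsi])
  have "frechet_derivative \<psi> (at a1) v = 0"
    by (rule deriv_const_right[OF dh]) (use psi0 Fv0 in \<open>simp add: \<psi>_def\<close>)
  moreover have "D2 F a1 v v > 0" using D2pos a1F v0 Fv0 by blast
  ultimately show False by (simp add: D2_def \<psi>_def)
qed

lemma amax_ex: assumes "u \<noteq> 0" shows "\<exists>!a. a \<in> K \<and> (\<forall>z\<in>K. u \<bullet> z \<le> u \<bullet> a)"
proof -
  have "K \<noteq> {}" using int0 interior_subset by blast
  moreover have "continuous_on K (\<lambda>z. u \<bullet> z)" by (intro continuous_intros)
  ultimately obtain a where "a \<in> K" "\<forall>z\<in>K. u \<bullet> z \<le> u \<bullet> a"
    using continuous_attains_sup[OF cpt] by blast
  then show ?thesis using K5[OF assms] by blast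
qed

end

definition amax :: "'a::real_inner set \<Rightarrow> 'a \<Rightarrow> 'a" where
  "amax K u = (THE a. a \<in> K \<and> (\<forall>z\<in>K. u \<bullet> z \<le> u \<bullet> a))"

lemma (in qbody) amax: assumes "u \<noteq> 0"
  shows "amax K u \<in> K" "\<forall>z\<in>K. u \<bullet> z \<le> u \<bullet> amax K u"
    "\<And>y. y \<in> K \<Longrightarrow> \<forall>z\<in>K. u \<bullet> z \<le> u \<bullet> y \<Longrightarrow> y = amax K u"
proof -
  have *: "amax K u \<in> K \<and> (\<forall>z\<in>K. u \<bullet> z \<le> u \<bullet> amax K u)"
    unfolding amax_def by (rule theI'[OF amax_ex[OF assms]])
  then show "amax K u \<in> K" "\<forall>z\<in>K. u \<bullet> z \<le> u \<bullet> amax K u" by auto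
  fix y assume "y \<in> K" "\<forall>z\<in>K. u \<bullet> z \<le> u \<bullet> y"
  then show "y = amax K u" using * amax_ex[OF assms] by blast
qed

lemma Rvec_rel:
  fixes l x :: "'d::finite phase"
  assumes lp: "l \<bullet> p > 0"
  shows "pos_prop ((1 / (l \<bullet> p)) *\<^sub>R Jmap l) x \<longleftrightarrow> (\<exists>k>0. l = k *\<^sub>R (- Jmap x))"
proof
  assume "pos_prop ((1 / (l \<bullet> p)) *\<^sub>R Jmap l) x"
  then obtain c where c: "c > 0" "(1 / (l \<bullet> p)) *\<^sub>R Jmap l = c *\<^sub>R x" by (auto simp: pos_prop_def)
  have "Jmap l = (l \<bullet> p) *\<^sub>R ((1 / (l \<bullet> p)) *\<^sub>R Jmap l)" using lp by simp
  also have "\<dots> = (c * (l \<bullet> p)) *\<^sub>R x" using c(2) by (simp add: mult.commute)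
  finally have "Jmap l = (c * (l \<bullet> p)) *\<^sub>R x" .
  then have "Jmap (Jmap l) = (c * (l \<bullet> p)) *\<^sub>R Jmap x" by (simp add: J_scale)
  then have "- l = (c * (l \<bullet> p)) *\<^sub>R Jmap x" by (simp add: J_J)
  then have "l = (c * (l \<bullet> p)) *\<^sub>R (- Jmap x)" by (metis minus_minus scaleR_minus_right)
  then show "\<exists>k>0. l = k *\<^sub>R (- Jmap x)" using c lp by (intro exI[of _ "c * (l \<bullet> p)"]) auto
next
  assume "\<exists>k>0. l = k *\<^sub>R (- Jmap x)"
  then obtain k where k: "k > 0" "l = k *\<^sub>R (- Jmap x)" by blast
  then have Jl: "Jmap l = k *\<^sub>R x" by (simp add: J_scale J_minus J_J)
  have eq: "(1 / (l \<bullet> p)) *\<^sub>R Jmap l = (k / (l \<bullet> p)) *\<^sub>R x" by (simp add: Jl)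
  show "pos_prop ((1 / (l \<bullet> p)) *\<^sub>R Jmap l) x" unfolding pos_prop_def
  proof (intro exI[of _ "k / (l \<bullet> p)"] conjI)
    show "k / (l \<bullet> p) > 0" using k(1) lp by simp
  qed (rule eq)
qed

lemma Jx_nz: "x \<noteq> 0 \<Longrightarrow> - Jmap x \<noteq> (0::'d::finite phase)"
  by (auto simp: Jmap_def prod_eq_iff)

lemma np_M:
  fixes K :: "'d::finite phase set"
  assumes qb: "qbody K F" and x0: "x \<noteq> 0"
  shows "n_plus (frontier K) x = amax K (- Jmap x)"
    "pos_prop (Rvec (frontier K) (amax K (- Jmap x))) x"
proof -
  interpret qbody K F by (rule qb)
  define u where "u = - Jmap x"
  have u0: "u \<noteq> 0" using Jx_nz[OF x0] by (simp add: u_def)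
  define a0 where "a0 = amax K u"
  have a0K: "a0 \<in> K" and a0m: "\<forall>z\<in>K. u \<bullet> z \<le> u \<bullet> a0" using amax(1,2)[OF u0] unfolding a0_def by auto
  have a0F: "a0 \<in> frontier K" by (rule max_frontier[OF a0K u0 a0m])
  have RV: "Rvec (frontier K) y = (1 / (grad y \<bullet> y)) *\<^sub>R Jmap (grad y)" if "y \<in> frontier K" for y
    by (rule Rvec_hyper[OF K3[OF that] gpos[OF that]])
  obtain c where c: "c > 0" "u = c *\<^sub>R grad a0" using K4[OF a0F u0 a0m] by blast
  have p0: "pos_prop (Rvec (frontier K) a0) x"
    unfolding RV[OF a0F] Rvec_rel[OF gpos[OF a0F]]
  proof (intro exI[of _ "1 / c"] conjI)
    show "1 / c > 0" using c(1) by simp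
    have "(1 / c) *\<^sub>R u = grad a0" using c by simp
    then show "grad a0 = (1 / c) *\<^sub>R - Jmap x" by (simp add: u_def)
  qed
  have un: "y = a0" if "y \<in> frontier K \<and> pos_prop (Rvec (frontier K) y) x" for y
  proof -
    have yF: "y \<in> frontier K" using that by blast
    have "pos_prop (Rvec (frontier K) y) x" using that by blast
    then have "\<exists>k>0. grad y = k *\<^sub>R (- Jmap x)"
      unfolding RV[OF yF] by (simp only: Rvec_rel[OF gpos[OF yF]])
    then obtain k where k: "k > 0" "grad y = k *\<^sub>R u" unfolding u_def by blast
    have "\<forall>z\<in>K. u \<bullet> z \<le> u \<bullet> y"
    proof
      fix z assume "z \<in> K"
      then have "k * (u \<bullet> z) \<le> k * (u \<bullet> y)" using K1[OF yF] k by simp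
      then show "u \<bullet> z \<le> u \<bullet> y" using k by simp
    qed
    moreover have "y \<in> K" using fK yF by blast
    ultimately show ?thesis unfolding a0_def by (intro amax(3)[OF u0])
  qed
  have np: "n_plus (frontier K) x = a0"
    unfolding n_plus_def
  proof (rule the_equality)
    show "a0 \<in> frontier K \<and> pos_prop (Rvec (frontier K) a0) x" using a0F p0 by blast
    fix y assume "y \<in> frontier K \<and> pos_prop (Rvec (frontier K) y) x"
    then show "y = a0" by (rule un)
  qed
  have aeq: "a0 = amax K (- Jmap x)" by (simp add: a0_def u_def)
  show "n_plus (frontier K) x = amax K (- Jmap x)" using np aeq by simp
  show "pos_prop (Rvec (frontier K) (amax K (- Jmap x))) x" using p0 aeq by simp
qed

lemma KK_basic:
  fixes K :: "'a::euclidean_space set"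
  assumes qb: "qbody K F"
  shows "compact (sym_body K)" "convex (sym_body K)" "0 \<in> interior (sym_body K)"
    "K \<subseteq> sym_body K" "closed (sym_body K)"
proof -
  interpret qbody K F by (rule qb)
  show c: "compact (sym_body K)" unfolding sym_body_def by (rule compact_differences[OF cpt cpt])
  then show "closed (sym_body K)" by (rule compact_imp_closed)
  have eq: "sym_body K = (\<Union>x\<in>K. \<Union>y\<in>K. {x - y})" unfolding sym_body_def by blast
  show "convex (sym_body K)" unfolding eq by (rule convex_differences[OF cvx cvx])
  have "0 \<in> K" using int0 interior_subset by blast
  show sub: "K \<subseteq> sym_body K"
  proof
    fix z assume "z \<in> K"
    then have "z = z - 0 \<and> z \<in> K \<and> 0 \<in> K" using \<open>0 \<in> K\<close> by simp
    then show "z \<in> sym_body K" unfolding sym_body_def by blast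
  qed
  show "0 \<in> interior (sym_body K)" using int0 interior_mono[OF sub] by blast
qed

lemma KKT:
  fixes K :: "'a::euclidean_space set"
  assumes qb: "qbody K F" and yF: "y \<in> frontier (sym_body K)" and l0: "l \<noteq> 0"
    and supp: "\<forall>z\<in>sym_body K. l \<bullet> z \<le> l \<bullet> y"
  shows "tangent_space (frontier (sym_body K)) y = {w. l \<bullet> w = 0}" "l \<bullet> y > 0"
proof -
  interpret qbody K F by (rule qb)
  note B = KK_basic[OF qb]
  show ly: "l \<bullet> y > 0" by (rule pos_support[OF B(3) l0 supp])
  have "y \<in> sym_body K" using yF B(5) frontier_subset_closed by blast
  then obtain a b where ab: "y = a - b" "a \<in> K" "b \<in> K" unfolding sym_body_def by blast
  have amx: "\<forall>z\<in>K. l \<bullet> z \<le> l \<bullet> a"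
  proof
    fix z assume "z \<in> K"
    then have "z - b \<in> sym_body K" using ab unfolding sym_body_def by blast
    then have "l \<bullet> (z - b) \<le> l \<bullet> (a - b)" using supp ab by blast
    then show "l \<bullet> z \<le> l \<bullet> a" by (simp add: inner_diff_right)
  qed
  have aF: "a \<in> frontier K" by (rule max_frontier[OF ab(2) l0 amx])
  obtain c where c: "c > 0" "l = c *\<^sub>R grad a" using K4[OF aF l0 amx] by blast
  show "tangent_space (frontier (sym_body K)) y = {w. l \<bullet> w = 0}"
  proof
    show "tangent_space (frontier (sym_body K)) y \<subseteq> {w. l \<bullet> w = 0}"
      using tangent_sub_kernel[OF B(5) supp] by blast
    show "{w. l \<bullet> w = 0} \<subseteq> tangent_space (frontier (sym_body K)) y"
    proof
      fix w assume "w \<in> {w. l \<bullet> w = 0}"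
      then have lw: "l \<bullet> w = 0" by simp
      then have gw: "grad a \<bullet> w = 0" using c by simp
      have flat: "\<forall>\<epsilon>>0. eventually (\<lambda>t. (1 / (1 + \<epsilon> * \<bar>t\<bar>)) *\<^sub>R (y + t *\<^sub>R w) \<in> sym_body K) (at 0)"
      proof (intro allI impI)
        fix \<epsilon> :: real assume ep: "\<epsilon> > 0"
        show "eventually (\<lambda>t. (1 / (1 + \<epsilon> * \<bar>t\<bar>)) *\<^sub>R (y + t *\<^sub>R w) \<in> sym_body K) (at 0)"
          using K2[OF aF gw ep]
        proof (rule eventually_mono)
          fix t :: real assume h: "(1 / (1 + \<epsilon> * \<bar>t\<bar>)) *\<^sub>R (a + t *\<^sub>R w) \<in> K"
          define s where "s = 1 / (1 + \<epsilon> * \<bar>t\<bar>)"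
          have s0: "0 \<le> s" "s \<le> 1" using ep by (auto simp: s_def add_pos_nonneg)
          have "0 \<in> K" using int0 interior_subset by blast
          have "s *\<^sub>R b + (1 - s) *\<^sub>R 0 \<in> K"
            by (rule convexD[OF cvx ab(3) \<open>0 \<in> K\<close>]) (use s0 in auto)
          then have sb: "s *\<^sub>R b \<in> K" by simp
          have "s *\<^sub>R (y + t *\<^sub>R w) = s *\<^sub>R (a + t *\<^sub>R w) - s *\<^sub>R b"
            by (simp add: ab(1) algebra_simps)
          moreover have "s *\<^sub>R (a + t *\<^sub>R w) \<in> K" using h by (simp add: s_def)
          ultimately have "s *\<^sub>R (y + t *\<^sub>R w) \<in> sym_body K"
            using sb unfolding sym_body_def by blast
          then show "(1 / (1 + \<epsilon> * \<bar>t\<bar>)) *\<^sub>R (y + t *\<^sub>R w) \<in> sym_body K"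
            by (simp add: s_def)
        qed
      qed
      show "w \<in> tangent_space (frontier (sym_body K)) y"
        by (rule tangent_of_flat[OF B(2) B(1) B(3) yF supp ly lw flat])
    qed
  qed
qed

lemma np_KK:
  fixes K :: "'d::finite phase set"
  assumes qb: "qbody K F" and x0: "x \<noteq> 0"
  shows "n_plus (frontier (sym_body K)) x = amax K (- Jmap x) - amax K (Jmap x)"
    "pos_prop (Rvec (frontier (sym_body K)) (amax K (- Jmap x) - amax K (Jmap x))) x"
proof -
  interpret qbody K F by (rule qb)
  note B = KK_basic[OF qb]
  define C where "C = sym_body K"
  define u where "u = - Jmap x"
  have u0: "u \<noteq> 0" using Jx_nz[OF x0] by (simp add: u_def)
  have mu0: "- u \<noteq> 0" using u0 by simp
  define ap where "ap = amax K u"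
  define am where "am = amax K (- u)"
  have apK: "ap \<in> K" and apm: "\<forall>z\<in>K. u \<bullet> z \<le> u \<bullet> ap"
    using amax(1,2)[OF u0] unfolding ap_def by auto
  have amK: "am \<in> K" and amm: "\<forall>z\<in>K. (- u) \<bullet> z \<le> (- u) \<bullet> am"
    using amax(1,2)[OF mu0] unfolding am_def by auto
  define p0 where "p0 = ap - am"
  have p0C: "p0 \<in> C" unfolding C_def sym_body_def p0_def using apK amK by blast
  have p0m: "\<forall>z\<in>C. u \<bullet> z \<le> u \<bullet> p0"
  proof
    fix z assume "z \<in> C"
    then obtain a b where ab: "z = a - b" "a \<in> K" "b \<in> K" unfolding C_def sym_body_def by blast
    have "u \<bullet> a \<le> u \<bullet> ap" using apm ab by blast
    moreover have "(- u) \<bullet> b \<le> (- u) \<bullet> am" using amm ab by blast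
    ultimately show "u \<bullet> z \<le> u \<bullet> p0" by (simp add: ab(1) p0_def inner_diff_right)
  qed
  have p0F: "p0 \<in> frontier C"
    using support_not_interior[OF u0 p0m] p0C B(5) by (simp add: frontier_def C_def)
  have RV: "Rvec (frontier C) y = (1 / (l \<bullet> y)) *\<^sub>R Jmap l"
    if "y \<in> frontier C" "l \<noteq> 0" "\<forall>z\<in>C. l \<bullet> z \<le> l \<bullet> y" for y l
    using KKT[OF qb, of y l] that Rvec_hyper[of "frontier C" y l] by (simp add: C_def)
  have lyp: "l \<bullet> y > 0"
    if "y \<in> frontier C" "l \<noteq> 0" "\<forall>z\<in>C. l \<bullet> z \<le> l \<bullet> y" for y l
    using KKT(2)[OF qb, of y l] that by (simp add: C_def)
  have pp: "pos_prop (Rvec (frontier C) p0) x"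
    unfolding RV[OF p0F u0 p0m] Rvec_rel[OF lyp[OF p0F u0 p0m]]
    by (intro exI[of _ 1]) (simp add: u_def)
  have un: "y = p0" if "y \<in> frontier C \<and> pos_prop (Rvec (frontier C) y) x" for y
  proof -
    have yF: "y \<in> frontier C" using that by blast
    have yC: "y \<in> C" using yF B(5) frontier_subset_closed by (auto simp: C_def)
    have ri: "rel_interior C = interior C"
      using B(3) rel_interior_nonempty_interior by (auto simp: C_def)
    have "y \<notin> rel_interior C" using yF ri by (simp add: frontier_def)
    moreover have "y \<in> closure C" using yC closure_subset by blast
    moreover have "convex C" using B(2) by (simp add: C_def)
    ultimately obtain a where a0: "a \<noteq> 0" and aa: "\<And>z. z \<in> closure C \<Longrightarrow> a \<bullet> y \<le> a \<bullet> z"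
      using supporting_hyperplane_relative_frontier by metis
    define l where "l = - a"
    have l0: "l \<noteq> 0" using a0 by (simp add: l_def)
    have lsupp: "\<forall>z\<in>C. l \<bullet> z \<le> l \<bullet> y"
    proof
      fix z assume "z \<in> C"
      then have "a \<bullet> y \<le> a \<bullet> z" using aa closure_subset by blast
      then show "l \<bullet> z \<le> l \<bullet> y" by (simp add: l_def)
    qed
    have "pos_prop (Rvec (frontier C) y) x" using that by blast
    then have "\<exists>k>0. l = k *\<^sub>R (- Jmap x)"
      unfolding RV[OF yF l0 lsupp] by (simp only: Rvec_rel[OF lyp[OF yF l0 lsupp]])
    then obtain k where k: "k > 0" "l = k *\<^sub>R u" unfolding u_def by blast
    have ym: "\<forall>z\<in>C. u \<bullet> z \<le> u \<bullet> y"
    proof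
      fix z assume "z \<in> C"
      then have "k * (u \<bullet> z) \<le> k * (u \<bullet> y)" using lsupp k by simp
      then show "u \<bullet> z \<le> u \<bullet> y" using k by simp
    qed
    obtain a' b' where ab: "y = a' - b'" "a' \<in> K" "b' \<in> K" using yC unfolding C_def sym_body_def by blast
    have a'm: "\<forall>z\<in>K. u \<bullet> z \<le> u \<bullet> a'"
    proof
      fix z assume "z \<in> K"
      then have "z - b' \<in> C" using ab unfolding C_def sym_body_def by blast
      then have "u \<bullet> (z - b') \<le> u \<bullet> (a' - b')" using ym ab by blast
      then show "u \<bullet> z \<le> u \<bullet> a'" by (simp add: inner_diff_right)
    qed
    have b'm: "\<forall>z\<in>K. (- u) \<bullet> z \<le> (- u) \<bullet> b'"
    proof
      fix z assume "z \<in> K"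
      then have "a' - z \<in> C" using ab unfolding C_def sym_body_def by blast
      then have "u \<bullet> (a' - z) \<le> u \<bullet> (a' - b')" using ym ab by blast
      then show "(- u) \<bullet> z \<le> (- u) \<bullet> b'" by (simp add: inner_diff_right)
    qed
    have "a' = ap" unfolding ap_def by (rule amax(3)[OF u0 ab(2) a'm])
    moreover have "b' = am" unfolding am_def by (rule amax(3)[OF mu0 ab(3) b'm])
    ultimately show "y = p0" by (simp add: ab(1) p0_def)
  qed
  have np: "n_plus (frontier C) x = p0"
    unfolding n_plus_def
  proof (rule the_equality)
    show "p0 \<in> frontier C \<and> pos_prop (Rvec (frontier C) p0) x" using p0F pp by blast
    fix y assume "y \<in> frontier C \<and> pos_prop (Rvec (frontier C) y) x"
    then show "y = p0" by (rule un)
  qed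
  have peq: "p0 = amax K (- Jmap x) - amax K (Jmap x)" by (simp add: p0_def ap_def am_def u_def)
  show "n_plus (frontier (sym_body K)) x = amax K (- Jmap x) - amax K (Jmap x)"
    using np peq by (simp add: C_def)
  show "pos_prop (Rvec (frontier (sym_body K)) (amax K (- Jmap x) - amax K (Jmap x))) x"
    using pp peq by (simp add: C_def)
qed

lemma nminus_plus: "n_minus M x = n_plus M (- x)"
  by (simp add: n_minus_def n_plus_def)

theorem lemma2p9:
  fixes K M :: "'d::finite phase set" and x :: "'d phase"
  assumes "qconvex_body K"
    and "M = frontier K"
    and "x \<in> outside (frontier (sym_body K))"
  shows "n_plus (frontier (sym_body K)) x = n_plus M x - n_minus M x
       \<and> n_plus M x - n_minus M x = - n_minus (frontier (sym_body K)) x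
       \<and> pos_prop (Rvec (frontier (sym_body K)) (n_plus M x - n_minus M x)) x
       \<and> pos_prop (Rvec (frontier (sym_body K)) (n_minus M x - n_plus M x)) (- x)"
proof -
  obtain F where qb: "qbody K F"
    using assms(1) unfolding qconvex_body_def qbody_def by blast
  note B = KK_basic[OF qb]
  have "x \<in> - closure (sym_body K)"
    using assms(3) outside_frontier_eq_complement_closure[OF compact_imp_bounded[OF B(1)] B(2)] by simp
  moreover have "0 \<in> closure (sym_body K)" using B(3) interior_subset closure_subset by blast
  ultimately have x0: "x \<noteq> 0" by auto
  have mx0: "- x \<noteq> 0" using x0 by simp
  have e1: "n_plus M x = amax K (- Jmap x)" using np_M(1)[OF qb x0] assms(2) by simp
  have e2: "n_minus M x = amax K (Jmap x)"
    using np_M(1)[OF qb mx0] assms(2) by (simp add: nminus_plus J_minus)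
  have e3: "n_plus (frontier (sym_body K)) x = amax K (- Jmap x) - amax K (Jmap x)"
    by (rule np_KK(1)[OF qb x0])
  have p3: "pos_prop (Rvec (frontier (sym_body K)) (amax K (- Jmap x) - amax K (Jmap x))) x"
    by (rule np_KK(2)[OF qb x0])
  have e4: "n_minus (frontier (sym_body K)) x = amax K (Jmap x) - amax K (- Jmap x)"
    using np_KK(1)[OF qb mx0] by (simp add: nminus_plus J_minus)
  have p4: "pos_prop (Rvec (frontier (sym_body K)) (amax K (Jmap x) - amax K (- Jmap x))) (- x)"
    using np_KK(2)[OF qb mx0] by (simp add: J_minus)
  show ?thesis using e1 e2 e3 e4 p3 p4 by simp
qed

end
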